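(* Let $\epsilon>0$, let $\{X_\lambda\}_{\lambda\in\mathbb N}$ be a family of distributions with $X_\lambda$ over $\{0,1\}^\lambda$ and $\mathbf H_{\min}(X_\lambda)>\lambda^\epsilon$ for every $\lambda$, and let $m:\mathbb N\to\mathbb N$ be polynomially bounded. Then for every quantum adversary $\mathcal A$ making at most polynomially many (in $\lambda$) oracle queries there is a negligible function $\mu$ such that for all $\lambda$, $$\Pr[\mathsf{Distinguish}(\mathcal A,\lambda,m(\lambda),X_\lambda)=1]\le \tfrac12+\mu(\lambda).$$
   Context: The game $\mathsf{Distinguish}(\mathcal A,\lambda,m,X)$: the challenger samples a uniformly random function $H:\{0,1\}^\lambda\to\{0,1\}^m$ and a uniform bit $b$. If $b=0$ it samples $x\leftarrow X$ and sends $H(x)$ to $\mathcal A$; if $b=1$ it samples a uniform $z\in\{0,1\}^m$ and sends $z$. $\mathcal A$ additionally has quantum oracle access to $H$ via the unitary $O^H:|x\rangle|y\rangle\mapsto|x\rangle|y\oplus H(x)\rangle$, and outputs a bit $b'$. The random variable $\mathsf{Distinguish}(\mathcal A,\lambda,m,X)$ equals $1$ iff $b'=b$. A function is negligible if it is $o(1/p(\lambda))$ for every polynomial $p$. *)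

theory Defs
  imports "HOL-Probability.Probability" "HOL-Library.Landau_Symbols" "HOL-Library.FuncSet"
    "Jordan_Normal_Form.Matrix"
begin

definition negligible :: "(nat \<Rightarrow> real) \<Rightarrow> bool" where
  "negligible \<mu> \<longleftrightarrow> (\<forall>k::nat. \<mu> \<in> o(\<lambda>n. 1 / real n ^ k))"

definition poly_bounded :: "(nat \<Rightarrow> nat) \<Rightarrow> bool" where
  "poly_bounded f \<longleftrightarrow> (\<exists>c k. \<forall>n. f n \<le> c * (n + 1) ^ k)"

text \<open>Bit strings in {0,1}^n are encoded as naturals below 2^n.
  Min-entropy: H_min(X) = - log2 (max_x Pr[X = x]).\<close>
definition min_entropy :: "nat pmf \<Rightarrow> real" where
  "min_entropy X = - log 2 (Sup (pmf X ` UNIV))"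

text \<open>Hilbert space of the adversary at parameters (lam, m) with workspace dimension w:
  basis states |x>|y>|v> with x < 2^lam (query input), y < 2^m (answer register),
  v < w (workspace), encoded as the index (x * 2^m + y) * w + v.\<close>
definition qdim :: "nat \<Rightarrow> nat \<Rightarrow> nat \<Rightarrow> nat" where
  "qdim lam m w = 2 ^ lam * 2 ^ m * w"

definition oracle_idx :: "nat \<Rightarrow> nat \<Rightarrow> (nat \<Rightarrow> nat) \<Rightarrow> nat \<Rightarrow> nat" where
  "oracle_idx m w H j =
     (let x = j div (2 ^ m * w); y = (j div w) mod 2 ^ m; v = j mod w
      in (x * 2 ^ m + Bit_Operations.xor y (H x)) * w + v)"

text \<open>The unitary O^H : |x>|y>|v> \<mapsto> |x>|y xor H(x)>|v>.\<close>
definition oracle_mat :: "nat \<Rightarrow> nat \<Rightarrow> nat \<Rightarrow> (nat \<Rightarrow> nat) \<Rightarrow> complex mat" where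
  "oracle_mat lam m w H =
     mat (qdim lam m w) (qdim lam m w) (\<lambda>(i, j). if i = oracle_idx m w H j then 1 else 0)"

definition adjoint_mat :: "complex mat \<Rightarrow> complex mat" where
  "adjoint_mat A = mat (dim_col A) (dim_row A) (\<lambda>(i, j). cnj (A $$ (j, i)))"

definition unitary_mat :: "nat \<Rightarrow> complex mat \<Rightarrow> bool" where
  "unitary_mat n U \<longleftrightarrow> U \<in> carrier_mat n n \<and> adjoint_mat U * U = 1\<^sub>m n"

definition projector_mat :: "nat \<Rightarrow> complex mat \<Rightarrow> bool" where
  "projector_mat n P \<longleftrightarrow> P \<in> carrier_mat n n \<and> P * P = P \<and> adjoint_mat P = P"

definition sq_norm :: "complex vec \<Rightarrow> real" where
  "sq_norm v = (\<Sum>i<dim_vec v. (cmod (v $ i))\<^sup>2)"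

text \<open>A query-bounded quantum adversary (for one value of the security parameter):
  on classical input z it prepares the state qa_init z, then alternately applies
  unitaries qa_unit z 0, O^H, qa_unit z 1, O^H, ..., O^H, qa_unit z qa_nq
  (so exactly qa_nq oracle queries), and finally measures the projective measurement
  {qa_meas z, 1 - qa_meas z}, outputting b' = 1 on outcome qa_meas z.\<close>
record qadv =
  qa_ws   :: nat
  qa_nq   :: nat
  qa_init :: "nat \<Rightarrow> complex vec"
  qa_unit :: "nat \<Rightarrow> nat \<Rightarrow> complex mat"
  qa_meas :: "nat \<Rightarrow> complex mat"

definition wf_qadv :: "nat \<Rightarrow> nat \<Rightarrow> qadv \<Rightarrow> bool" where
  "wf_qadv lam m A \<longleftrightarrow> 0 < qa_ws A \<and>
     (\<forall>z < 2 ^ m.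
        qa_init A z \<in> carrier_vec (qdim lam m (qa_ws A)) \<and> sq_norm (qa_init A z) = 1 \<and>
        (\<forall>i \<le> qa_nq A. unitary_mat (qdim lam m (qa_ws A)) (qa_unit A z i)) \<and>
        projector_mat (qdim lam m (qa_ws A)) (qa_meas A z))"

primrec qa_state :: "qadv \<Rightarrow> nat \<Rightarrow> nat \<Rightarrow> (nat \<Rightarrow> nat) \<Rightarrow> nat \<Rightarrow> nat \<Rightarrow> complex vec" where
  "qa_state A lam m H z 0 = qa_unit A z 0 *\<^sub>v qa_init A z"
| "qa_state A lam m H z (Suc i) =
     qa_unit A z (Suc i) *\<^sub>v (oracle_mat lam m (qa_ws A) H *\<^sub>v qa_state A lam m H z i)"

definition qa_accept :: "qadv \<Rightarrow> nat \<Rightarrow> nat \<Rightarrow> (nat \<Rightarrow> nat) \<Rightarrow> nat \<Rightarrow> real" where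
  "qa_accept A lam m H z = sq_norm (qa_meas A z *\<^sub>v qa_state A lam m H z (qa_nq A))"

definition Hfuns :: "nat \<Rightarrow> nat \<Rightarrow> (nat \<Rightarrow> nat) set" where
  "Hfuns lam m = PiE {..<2 ^ lam} (\<lambda>_. {..<2 ^ m})"

text \<open>Outcome distribution of the indicator [b' = b]; the bit b = 1 is encoded as True.\<close>
definition distinguish :: "qadv \<Rightarrow> nat \<Rightarrow> nat \<Rightarrow> nat pmf \<Rightarrow> bool pmf" where
  "distinguish A lam m X = do {
     H \<leftarrow> pmf_of_set (Hfuns lam m);
     b \<leftarrow> bernoulli_pmf (1 / 2);
     c \<leftarrow> (if b then pmf_of_set {..<2 ^ m} else map_pmf H X);
     b' \<leftarrow> bernoulli_pmf (qa_accept A lam m H c);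
     return_pmf (b' = b) }"

end

theory Submission
  imports Defs "HOL-Real_Asymp.Real_Asymp"
begin

definition ip :: "nat \<Rightarrow> (nat \<Rightarrow> complex) \<Rightarrow> (nat \<Rightarrow> complex) \<Rightarrow> complex" where
  "ip n f g = (\<Sum>i<n. f i * cnj (g i))"

lemma mv_index: "A \<in> carrier_mat n k \<Longrightarrow> u \<in> carrier_vec k \<Longrightarrow> i < n \<Longrightarrow>
   vec_index (A *\<^sub>v u) i = (\<Sum>j<k. A $$ (i,j) * vec_index u j)"
  by (auto simp: scalar_prod_def atLeast0LessThan)

lemma ip_adj:
  assumes A: "A \<in> carrier_mat n n" and u: "u \<in> carrier_vec n" and v: "v \<in> carrier_vec n"
  shows "ip n (vec_index (A *\<^sub>v u)) (vec_index v) = ip n (vec_index u) (vec_index (adjoint_mat A *\<^sub>v v))"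
proof -
  have adjc: "adjoint_mat A \<in> carrier_mat n n" using A by (auto simp: adjoint_mat_def)
  have adj: "\<And>i j. i<n \<Longrightarrow> j<n \<Longrightarrow> adjoint_mat A $$ (j,i) = cnj (A $$ (i,j))"
    using A by (auto simp: adjoint_mat_def)
  have "ip n (vec_index (A *\<^sub>v u)) (vec_index v) = (\<Sum>i<n. \<Sum>j<n. A $$ (i,j) * vec_index u j * cnj (vec_index v i))"
    unfolding ip_def by (intro sum.cong refl) (simp add: mv_index[OF A u] sum_distrib_right)
  also have "\<dots> = (\<Sum>j<n. \<Sum>i<n. A $$ (i,j) * vec_index u j * cnj (vec_index v i))"
    by (rule sum.swap)
  also have "\<dots> = ip n (vec_index u) (vec_index (adjoint_mat A *\<^sub>v v))"
    unfolding ip_def 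
    by (intro sum.cong refl) (simp add: mv_index[OF adjc v] adj sum_distrib_left mult_ac)
  finally show ?thesis .
qed

definition nrm :: "nat \<Rightarrow> (nat \<Rightarrow> complex) \<Rightarrow> real" where
  "nrm n f = L2_set (\<lambda>i. cmod (f i)) {..<n}"

lemma nrm_nonneg[simp]: "0 \<le> nrm n f" by (simp add: nrm_def)

lemma nrm_sq: "nrm n f ^ 2 = (\<Sum>i<n. (cmod (f i))\<^sup>2)"
  unfolding nrm_def L2_set_def by (simp add: sum_nonneg)

lemma ip_self: "ip n f f = complex_of_real (nrm n f ^ 2)"
  unfolding ip_def nrm_sq of_real_sum by (intro sum.cong refl) (rule complex_norm_square[symmetric])

lemma sq_norm_nrm: "v \<in> carrier_vec n \<Longrightarrow> sq_norm v = nrm n (vec_index v) ^ 2"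
  unfolding sq_norm_def nrm_sq by simp

lemma ip_bound: "cmod (ip n f g) \<le> nrm n f * nrm n g"
proof -
  have "cmod (ip n f g) \<le> (\<Sum>i<n. cmod (f i * cnj (g i)))"
    unfolding ip_def by (rule norm_sum)
  also have "\<dots> = (\<Sum>i<n. \<bar>cmod (f i)\<bar> * \<bar>cmod (g i)\<bar>)"
    by (simp add: norm_mult)
  also have "\<dots> \<le> nrm n f * nrm n g" unfolding nrm_def by (rule L2_set_mult_ineq)
  finally show ?thesis .
qed

lemma nrm_triangle: "nrm n (\<lambda>i. f i + g i) \<le> nrm n f + nrm n g"
proof -
  have "nrm n (\<lambda>i. f i + g i) \<le> L2_set (\<lambda>i. cmod (f i) + cmod (g i)) {..<n}"
    unfolding nrm_def by (rule L2_set_mono) (auto intro: norm_triangle_ineq)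
  also have "\<dots> \<le> nrm n f + nrm n g" unfolding nrm_def by (rule L2_set_triangle_ineq)
  finally show ?thesis .
qed

lemma nrm_cong: "(\<And>i. i < n \<Longrightarrow> f i = g i) \<Longrightarrow> nrm n f = nrm n g"
  unfolding nrm_def by (intro L2_set_cong) auto

lemma sq_eq_nonneg: "(x::real) \<ge> 0 \<Longrightarrow> y \<ge> 0 \<Longrightarrow> x^2 = y^2 \<Longrightarrow> x = y"
  by (simp add: power2_eq_iff_nonneg)

lemma unitary_nrm:
  assumes U: "unitary_mat n U" and v: "v \<in> carrier_vec n"
  shows "nrm n (vec_index (U *\<^sub>v v)) = nrm n (vec_index v)"
proof -
  have Uc: "U \<in> carrier_mat n n" and UU: "adjoint_mat U * U = 1\<^sub>m n"
    using U by (auto simp: unitary_mat_def)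
  have adjc: "adjoint_mat U \<in> carrier_mat n n" using Uc by (auto simp: adjoint_mat_def)
  have Uv: "U *\<^sub>v v \<in> carrier_vec n" using Uc v by auto
  have "complex_of_real (nrm n (vec_index (U *\<^sub>v v)) ^ 2) = ip n (vec_index (U *\<^sub>v v)) (vec_index (U *\<^sub>v v))"
    by (rule ip_self[symmetric])
  also have "\<dots> = ip n (vec_index v) (vec_index (adjoint_mat U *\<^sub>v (U *\<^sub>v v)))"
    by (rule ip_adj[OF Uc v Uv])
  also have "adjoint_mat U *\<^sub>v (U *\<^sub>v v) = (adjoint_mat U * U) *\<^sub>v v"
    by (rule assoc_mult_mat_vec[OF adjc Uc v, symmetric])
  also have "\<dots> = v" unfolding UU using v by (rule one_mult_mat_vec)
  also have "ip n (vec_index v) (vec_index v) = complex_of_real (nrm n (vec_index v) ^ 2)"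
    by (rule ip_self)
  finally have "nrm n (vec_index (U *\<^sub>v v)) ^ 2 = nrm n (vec_index v) ^ 2"
    by (metis of_real_eq_iff)
  thus ?thesis using sq_eq_nonneg nrm_nonneg by blast
qed

lemma proj_nrm:
  assumes P: "projector_mat n P" and v: "v \<in> carrier_vec n"
  shows "nrm n (vec_index (P *\<^sub>v v)) \<le> nrm n (vec_index v)"
proof -
  have Pc: "P \<in> carrier_mat n n" and PP: "P * P = P" and Pa: "adjoint_mat P = P"
    using P by (auto simp: projector_mat_def)
  have Pv: "P *\<^sub>v v \<in> carrier_vec n" using Pc v by auto
  have "complex_of_real (nrm n (vec_index (P *\<^sub>v v)) ^ 2) = ip n (vec_index (P *\<^sub>v v)) (vec_index (P *\<^sub>v v))"
    by (rule ip_self[symmetric])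
  also have "\<dots> = ip n (vec_index v) (vec_index (adjoint_mat P *\<^sub>v (P *\<^sub>v v)))"
    by (rule ip_adj[OF Pc v Pv])
  also have "adjoint_mat P *\<^sub>v (P *\<^sub>v v) = (P * P) *\<^sub>v v"
    unfolding Pa by (rule assoc_mult_mat_vec[OF Pc Pc v, symmetric])
  also have "\<dots> = P *\<^sub>v v" unfolding PP ..
  finally have "nrm n (vec_index (P *\<^sub>v v)) ^ 2 = cmod (ip n (vec_index v) (vec_index (P *\<^sub>v v)))"
    by (metis norm_of_real abs_of_nonneg zero_le_power2)
  also have "\<dots> \<le> nrm n (vec_index v) * nrm n (vec_index (P *\<^sub>v v))" by (rule ip_bound)
  finally have *: "nrm n (vec_index (P *\<^sub>v v)) ^ 2 \<le> nrm n (vec_index v) * nrm n (vec_index (P *\<^sub>v v))" .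
  show ?thesis
  proof (cases "nrm n (vec_index (P *\<^sub>v v)) = 0")
    case True thus ?thesis by simp
  next
    case False
    hence "nrm n (vec_index (P *\<^sub>v v)) > 0" using nrm_nonneg[of n "vec_index (P *\<^sub>v v)"] by linarith
    with * show ?thesis by (simp add: power2_eq_square mult_le_cancel_right)
  qed
qed


lemma xor_lt: "(y::nat) < 2^m \<Longrightarrow> h < 2^m \<Longrightarrow> Bit_Operations.xor y h < 2^m"
proof -
  assume a: "y < 2^m" "h < 2^m"
  have "take_bit m (Bit_Operations.xor y h) = Bit_Operations.xor y h"
    using a by (simp add: take_bit_nat_eq_self_iff[symmetric])
  moreover have "take_bit m (Bit_Operations.xor y h) < 2^m" by (rule take_bit_nat_less_exp)
  ultimately show ?thesis by simp
qed

lemma xor_xor: "Bit_Operations.xor (Bit_Operations.xor (y::nat) h) h = y"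
  by (simp add: xor.assoc)

lemma decomp:
  fixes v w y x m :: nat
  assumes "v < w" "y < 2^m"
  shows "((x*2^m + y)*w + v) div (2^m*w) = x" "(((x*2^m + y)*w + v) div w) mod 2^m = y"
        "((x*2^m + y)*w + v) mod w = v" "((x*2^m + y)*w + v) div w = x*2^m + y"
proof -
  have w: "w > 0" using assms by auto
  show d: "((x*2^m + y)*w + v) div w = x*2^m + y" using assms by simp
  show "(((x*2^m + y)*w + v) div w) mod 2^m = y" using d assms by simp
  show "((x*2^m + y)*w + v) mod w = v" using assms by simp
  have "((x*2^m + y)*w + v) div (2^m*w) = (((x*2^m + y)*w + v) div w) div 2^m"
    by (metis div_mult2_eq mult.commute)
  thus "((x*2^m + y)*w + v) div (2^m*w) = x" using d assms by simp
qed

lemma recomp: "w > 0 \<Longrightarrow> (j::nat) = ((j div (2^m*w))*2^m + (j div w) mod 2^m)*w + j mod w"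
proof -
  assume w: "w > 0"
  have "j div (2^m*w) = (j div w) div 2^m" by (metis div_mult2_eq mult.commute)
  hence "(j div (2^m*w))*2^m + (j div w) mod 2^m = j div w" by (metis div_mult_mod_eq)
  thus ?thesis by (metis div_mult_mod_eq)
qed

lemma oidx_def2: "w > 0 \<Longrightarrow> oracle_idx m w H j =
   ((j div (2^m*w))*2^m + Bit_Operations.xor ((j div w) mod 2^m) (H (j div (2^m*w))))*w + j mod w"
  unfolding oracle_idx_def Let_def by simp

lemma oidx_props:
  assumes w: "w > 0" and H: "\<forall>x<2^lam. H x < 2^m" and j: "j < qdim lam m w"
  shows "oracle_idx m w H j < qdim lam m w"
    "oracle_idx m w H (oracle_idx m w H j) = j"
    "oracle_idx m w H j div (2^m*w) = j div (2^m*w)"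
proof -
  define x where "x = j div (2^m*w)"
  define y where "y = (j div w) mod 2^m"
  define v where "v = j mod w"
  define h where "h = H x"
  have xl: "x < 2^lam" using j unfolding x_def qdim_def
    by (metis less_mult_imp_div_less mult.assoc)
  have hl: "h < 2^m" using H xl h_def by auto
  have yl: "y < 2^m" unfolding y_def by simp
  have vl: "v < w" unfolding v_def using w by simp
  have yh: "Bit_Operations.xor y h < 2^m" using xor_lt yl hl by blast
  have s: "oracle_idx m w H j = (x*2^m + Bit_Operations.xor y h)*w + v"
    using oidx_def2[OF w] unfolding x_def y_def v_def h_def by simp
  show dd: "oracle_idx m w H j div (2^m*w) = j div (2^m*w)"
    unfolding s x_def[symmetric] using decomp[OF vl yh] by simp
  have "oracle_idx m w H j < (x+1) * (2^m*w)"
  proof -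
    have "(x*2^m + Bit_Operations.xor y h)*w + v < (x*2^m + Bit_Operations.xor y h)*w + w" using vl by simp
    also have "\<dots> = (x*2^m + Bit_Operations.xor y h + 1)*w" by simp
    also have "\<dots> \<le> (x*2^m + 2^m)*w" using yh by (intro mult_right_mono) auto
    finally show ?thesis unfolding s by (simp add: algebra_simps)
  qed
  also have "\<dots> \<le> 2^lam * (2^m*w)" using xl by (intro mult_right_mono) auto
  finally show "oracle_idx m w H j < qdim lam m w" unfolding qdim_def by (simp add: mult.assoc)
  show "oracle_idx m w H (oracle_idx m w H j) = j"
    using oidx_def2[OF w, of m H "oracle_idx m w H j"] decomp[OF vl yh, of x]
    unfolding s h_def apply (simp add: xor_xor)
    using recomp[OF w, of j m] x_def y_def v_def by simp
qed


lemma oracle_apply: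
  assumes w: "w > 0" and H: "\<forall>x<2^lam. H x < 2^m" and u: "u \<in> carrier_vec (qdim lam m w)"
    and i: "i < qdim lam m w"
  shows "vec_index (oracle_mat lam m w H *\<^sub>v u) i = vec_index u (oracle_idx m w H i)"
proof -
  let ?n = "qdim lam m w" and ?s = "oracle_idx m w H"
  have Oc: "oracle_mat lam m w H \<in> carrier_mat ?n ?n" by (simp add: oracle_mat_def)
  have "vec_index (oracle_mat lam m w H *\<^sub>v u) i = (\<Sum>j<?n. oracle_mat lam m w H $$ (i,j) * vec_index u j)"
    by (rule mv_index[OF Oc u i])
  also have "\<dots> = (\<Sum>j<?n. if j = ?s i then vec_index u j else 0)"
  proof (intro sum.cong refl)
    fix j assume j: "j \<in> {..<?n}"
    have "(i = ?s j) = (j = ?s i)"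
      using oidx_props[OF w H] i j by (metis lessThan_iff)
    thus "oracle_mat lam m w H $$ (i,j) * vec_index u j = (if j = ?s i then vec_index u j else 0)"
      using i j by (simp add: oracle_mat_def)
  qed
  also have "\<dots> = vec_index u (?s i)" using oidx_props(1)[OF w H i] by (simp add: sum.delta')
  finally show ?thesis .
qed

lemma L2_reindex: "bij_betw g S S \<Longrightarrow> L2_set (\<lambda>i. f (g i)) S = L2_set f S"
  unfolding L2_set_def using sum.reindex_bij_betw[of g S S "\<lambda>i. (f i)^2"] by simp

lemma oidx_bij:
  assumes w: "w > 0" and H: "\<forall>x<2^lam. H x < 2^m"
  shows "bij_betw (oracle_idx m w H) {..<qdim lam m w} {..<qdim lam m w}"
    "bij_betw (oracle_idx m w H) {i. i < qdim lam m w \<and> i div (2^m*w) = x0} {i. i < qdim lam m w \<and> i div (2^m*w) = x0}"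
  by (rule bij_betw_byWitness[where f'="oracle_idx m w H"]; use oidx_props[OF w H] in auto)+

lemma oracle_nrm:
  assumes w: "w > 0" and H: "\<forall>x<2^lam. H x < 2^m" and u: "u \<in> carrier_vec (qdim lam m w)"
  shows "nrm (qdim lam m w) (vec_index (oracle_mat lam m w H *\<^sub>v u)) = nrm (qdim lam m w) (vec_index u)"
proof -
  have "nrm (qdim lam m w) (vec_index (oracle_mat lam m w H *\<^sub>v u)) =
     L2_set (\<lambda>i. cmod (vec_index u (oracle_idx m w H i))) {..<qdim lam m w}"
    unfolding nrm_def by (intro L2_set_cong refl) (simp add: oracle_apply[OF w H u])
  also have "\<dots> = nrm (qdim lam m w) (vec_index u)"
    unfolding nrm_def by (rule L2_reindex[OF oidx_bij(1)[OF w H], where f="\<lambda>i. cmod (vec_index u i)"])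
  finally show ?thesis .
qed

definition Sx :: "nat \<Rightarrow> nat \<Rightarrow> nat \<Rightarrow> nat \<Rightarrow> nat set" where
  "Sx lam m w x0 = {i. i < qdim lam m w \<and> i div (2^m*w) = x0}"

definition px :: "nat \<Rightarrow> nat \<Rightarrow> nat \<Rightarrow> complex vec \<Rightarrow> nat \<Rightarrow> real" where
  "px lam m w u x0 = L2_set (\<lambda>i. cmod (vec_index u i)) (Sx lam m w x0)"

lemma oracle_diff:
  assumes w: "w > 0" and H: "\<forall>x<2^lam. H x < 2^m" and H': "\<forall>x<2^lam. H' x < 2^m"
    and agree: "\<And>y. y \<noteq> x0 \<Longrightarrow> H y = H' y"
  shows "nrm (qdim lam m w) (\<lambda>i. vec_index u (oracle_idx m w H i) - vec_index u (oracle_idx m w H' i))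
     \<le> 2 * px lam m w u x0"
proof -
  let ?n = "qdim lam m w" and ?S = "Sx lam m w x0"
  let ?g = "\<lambda>i. cmod (vec_index u (oracle_idx m w H i) - vec_index u (oracle_idx m w H' i))"
  have z: "\<And>i. i \<in> {..<?n} - ?S \<Longrightarrow> ?g i = 0"
    using agree unfolding Sx_def oracle_idx_def Let_def by auto
  have "nrm ?n (\<lambda>i. vec_index u (oracle_idx m w H i) - vec_index u (oracle_idx m w H' i)) = L2_set ?g ?S"
    unfolding nrm_def L2_set_def
    by (rule arg_cong[where f=sqrt], rule sum.mono_neutral_right) (use z in \<open>auto simp: Sx_def\<close>)
  also have "\<dots> \<le> L2_set (\<lambda>i. cmod (vec_index u (oracle_idx m w H i)) + cmod (vec_index u (oracle_idx m w H' i))) ?S"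
    by (rule L2_set_mono) (auto intro: norm_triangle_ineq4)
  also have "\<dots> \<le> L2_set (\<lambda>i. cmod (vec_index u (oracle_idx m w H i))) ?S + L2_set (\<lambda>i. cmod (vec_index u (oracle_idx m w H' i))) ?S"
    by (rule L2_set_triangle_ineq)
  also have "L2_set (\<lambda>i. cmod (vec_index u (oracle_idx m w H i))) ?S = px lam m w u x0"
    unfolding px_def Sx_def by (rule L2_reindex[OF oidx_bij(2)[OF w H], where f="\<lambda>i. cmod (vec_index u i)"])
  also have "L2_set (\<lambda>i. cmod (vec_index u (oracle_idx m w H' i))) ?S = px lam m w u x0"
    unfolding px_def Sx_def by (rule L2_reindex[OF oidx_bij(2)[OF w H'], where f="\<lambda>i. cmod (vec_index u i)"])
  finally show ?thesis by simp
qed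


lemma wfD:
  assumes "wf_qadv lam m A" "z < 2^m"
  shows "qa_ws A > 0" "qa_init A z \<in> carrier_vec (qdim lam m (qa_ws A))"
    "sq_norm (qa_init A z) = 1"
    "\<And>i. i \<le> qa_nq A \<Longrightarrow> unitary_mat (qdim lam m (qa_ws A)) (qa_unit A z i)"
    "projector_mat (qdim lam m (qa_ws A)) (qa_meas A z)"
  using assms unfolding wf_qadv_def by auto

lemma nrm1: "x \<ge> 0 \<Longrightarrow> x^2 = 1 \<Longrightarrow> (x::real) = 1"
  using power2_eq_1_iff[of x] by linarith

lemma state_props:
  assumes wf: "wf_qadv lam m A" and z: "z < 2^m" and H: "\<forall>x<2^lam. H x < 2^m" and i: "i \<le> qa_nq A"
  shows "qa_state A lam m H z i \<in> carrier_vec (qdim lam m (qa_ws A)) \<and>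
         nrm (qdim lam m (qa_ws A)) (vec_index (qa_state A lam m H z i)) = 1"
  using i
proof (induction i)
  case 0
  let ?n = "qdim lam m (qa_ws A)"
  have U: "unitary_mat ?n (qa_unit A z 0)" by (rule wfD(4)[OF wf z le0])
  hence Uc: "qa_unit A z 0 \<in> carrier_mat ?n ?n" unfolding unitary_mat_def by blast
  have ic: "qa_init A z \<in> carrier_vec ?n" by (rule wfD(2)[OF wf z])
  have "nrm ?n (vec_index (qa_init A z)) ^ 2 = sq_norm (qa_init A z)" by (rule sq_norm_nrm[OF ic, symmetric])
  also have "\<dots> = 1" by (rule wfD(3)[OF wf z])
  finally have n1: "nrm ?n (vec_index (qa_init A z)) = 1" by (rule nrm1[OF nrm_nonneg])
  have e: "qa_state A lam m H z 0 = qa_unit A z 0 *\<^sub>v qa_init A z" by (rule qa_state.simps(1))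
  show ?case unfolding e
    by (intro conjI mult_mat_vec_carrier[OF Uc ic] trans[OF unitary_nrm[OF U ic] n1])
next
  case (Suc i)
  let ?n = "qdim lam m (qa_ws A)" and ?O = "oracle_mat lam m (qa_ws A) H"
  have IH: "qa_state A lam m H z i \<in> carrier_vec ?n" "nrm ?n (vec_index (qa_state A lam m H z i)) = 1"
    using Suc by auto
  have U: "unitary_mat ?n (qa_unit A z (Suc i))" by (rule wfD(4)[OF wf z Suc.prems])
  hence Uc: "qa_unit A z (Suc i) \<in> carrier_mat ?n ?n" unfolding unitary_mat_def by blast
  have Oc: "?O \<in> carrier_mat ?n ?n" unfolding oracle_mat_def by (rule mat_carrier)
  have Ov: "?O *\<^sub>v qa_state A lam m H z i \<in> carrier_vec ?n" by (rule mult_mat_vec_carrier[OF Oc IH(1)])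
  have e: "qa_state A lam m H z (Suc i) = qa_unit A z (Suc i) *\<^sub>v (?O *\<^sub>v qa_state A lam m H z i)"
    by (rule qa_state.simps(2))
  show ?case unfolding e
    by (intro conjI mult_mat_vec_carrier[OF Uc Ov] trans[OF unitary_nrm[OF U Ov]]
        trans[OF oracle_nrm[OF wfD(1)[OF wf z] H IH(1)] IH(2)])
qed

lemma hybrid:
  assumes wf: "wf_qadv lam m A" and z: "z < 2^m" and H: "\<forall>x<2^lam. H x < 2^m"
    and H': "\<forall>x<2^lam. H' x < 2^m" and agree: "\<And>y. y \<noteq> x0 \<Longrightarrow> H y = H' y"
    and i: "i \<le> qa_nq A"
  shows "nrm (qdim lam m (qa_ws A)) (\<lambda>j. vec_index (qa_state A lam m H z i) j - vec_index (qa_state A lam m H' z i) j)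
     \<le> 2 * (\<Sum>k<i. px lam m (qa_ws A) (qa_state A lam m H z k) x0)"
  using i
proof (induction i)
  case 0
  then show ?case by (simp add: nrm_def L2_set_def)
next
  case (Suc i)
  let ?n = "qdim lam m (qa_ws A)" and ?w = "qa_ws A"
  let ?O = "oracle_mat lam m ?w H" and ?O' = "oracle_mat lam m ?w H'"
  let ?p = "qa_state A lam m H z i" and ?p' = "qa_state A lam m H' z i"
  let ?s = "oracle_idx m ?w H" and ?s' = "oracle_idx m ?w H'"
  have w: "?w > 0" using wfD(1)[OF wf z] .
  have IH: "nrm ?n (\<lambda>j. vec_index ?p j - vec_index ?p' j) \<le> 2 * (\<Sum>k<i. px lam m ?w (qa_state A lam m H z k) x0)"
    using Suc by simp
  have pc: "?p \<in> carrier_vec ?n" using state_props[OF wf z H] Suc.prems by simp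
  have pc': "?p' \<in> carrier_vec ?n" using state_props[OF wf z H'] Suc.prems by simp
  have U: "unitary_mat ?n (qa_unit A z (Suc i))" using wfD(4)[OF wf z] Suc.prems by simp
  hence Uc: "qa_unit A z (Suc i) \<in> carrier_mat ?n ?n" by (simp add: unitary_mat_def)
  have Oc: "?O \<in> carrier_mat ?n ?n" "?O' \<in> carrier_mat ?n ?n" by (simp_all add: oracle_mat_def)
  have Ov: "?O *\<^sub>v ?p \<in> carrier_vec ?n" "?O' *\<^sub>v ?p' \<in> carrier_vec ?n" using Oc pc pc' by auto
  have "nrm ?n (\<lambda>j. vec_index (qa_state A lam m H z (Suc i)) j - vec_index (qa_state A lam m H' z (Suc i)) j)
      = nrm ?n (vec_index (qa_unit A z (Suc i) *\<^sub>v (?O *\<^sub>v ?p - ?O' *\<^sub>v ?p')))"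
    using mult_minus_distrib_mat_vec[OF Uc Ov] Uc Ov by (intro nrm_cong) (simp add: carrier_vecD)
  also have "\<dots> = nrm ?n (vec_index (?O *\<^sub>v ?p - ?O' *\<^sub>v ?p'))"
    using unitary_nrm[OF U] Ov by simp
  also have "\<dots> = nrm ?n (\<lambda>j. (vec_index ?p (?s j) - vec_index ?p (?s' j)) + (vec_index ?p (?s' j) - vec_index ?p' (?s' j)))"
  proof (intro nrm_cong)
    fix j assume j: "j < ?n"
    have d: "dim_vec (?O' *\<^sub>v ?p') = ?n" using carrier_vecD[OF Ov(2)] .
    show "vec_index (?O *\<^sub>v ?p - ?O' *\<^sub>v ?p') j = (vec_index ?p (?s j) - vec_index ?p (?s' j)) + (vec_index ?p (?s' j) - vec_index ?p' (?s' j))"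
      using j d by (simp add: oracle_apply[OF w H pc j] oracle_apply[OF w H' pc' j])
  qed
  also have "\<dots> \<le> nrm ?n (\<lambda>j. vec_index ?p (?s j) - vec_index ?p (?s' j)) + nrm ?n (\<lambda>j. vec_index ?p (?s' j) - vec_index ?p' (?s' j))"
    by (rule nrm_triangle)
  also have "nrm ?n (\<lambda>j. vec_index ?p (?s' j) - vec_index ?p' (?s' j)) = nrm ?n (\<lambda>j. vec_index ?p j - vec_index ?p' j)"
    unfolding nrm_def by (rule L2_reindex[OF oidx_bij(1)[OF w H'], where f="\<lambda>j. cmod (vec_index ?p j - vec_index ?p' j)"])
  also have "nrm ?n (\<lambda>j. vec_index ?p (?s j) - vec_index ?p (?s' j)) \<le> 2 * px lam m ?w ?p x0"
    by (rule oracle_diff[OF w H H' agree])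
  finally show ?case using IH by simp
qed


lemma acc_bounds:
  assumes wf: "wf_qadv lam m A" and z: "z < 2^m" and H: "\<forall>x<2^lam. H x < 2^m"
  shows "0 \<le> qa_accept A lam m H z" "qa_accept A lam m H z \<le> 1"
proof -
  let ?n = "qdim lam m (qa_ws A)" and ?p = "qa_state A lam m H z (qa_nq A)" and ?M = "qa_meas A z"
  have sp: "?p \<in> carrier_vec ?n" "nrm ?n (vec_index ?p) = 1" using state_props[OF wf z H le_refl] by auto
  have P: "projector_mat ?n ?M" by (rule wfD(5)[OF wf z])
  hence Mc: "?M \<in> carrier_mat ?n ?n" unfolding projector_mat_def by blast
  have e: "qa_accept A lam m H z = nrm ?n (vec_index (?M *\<^sub>v ?p)) ^ 2"
    unfolding qa_accept_def by (rule sq_norm_nrm[OF mult_mat_vec_carrier[OF Mc sp(1)]])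
  show "0 \<le> qa_accept A lam m H z" unfolding e by simp
  have "nrm ?n (vec_index (?M *\<^sub>v ?p)) \<le> 1" using proj_nrm[OF P sp(1)] sp(2) by simp
  thus "qa_accept A lam m H z \<le> 1" unfolding e
    by (metis nrm_nonneg power_le_one)
qed

lemma nrm_rev_tri: "\<bar>nrm n f - nrm n g\<bar> \<le> nrm n (\<lambda>i. f i - g i)"
proof -
  have "nrm n f = nrm n (\<lambda>i. (f i - g i) + g i)" by simp
  also have "\<dots> \<le> nrm n (\<lambda>i. f i - g i) + nrm n g" by (rule nrm_triangle)
  finally have 1: "nrm n f \<le> nrm n (\<lambda>i. f i - g i) + nrm n g" .
  have "nrm n g = nrm n (\<lambda>i. - (f i - g i) + f i)" by simp
  also have "\<dots> \<le> nrm n (\<lambda>i. - (f i - g i)) + nrm n f" by (rule nrm_triangle)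
  also have "nrm n (\<lambda>i. - (f i - g i)) = nrm n (\<lambda>i. f i - g i)" unfolding nrm_def by (simp add: norm_minus_commute)
  finally have 2: "nrm n g \<le> nrm n (\<lambda>i. f i - g i) + nrm n f" .
  from 1 2 show ?thesis by linarith
qed

lemma acc_diff:
  assumes wf: "wf_qadv lam m A" and z: "z < 2^m" and H: "\<forall>x<2^lam. H x < 2^m"
    and H': "\<forall>x<2^lam. H' x < 2^m" and agree: "\<And>y. y \<noteq> x0 \<Longrightarrow> H y = H' y"
  shows "\<bar>qa_accept A lam m H z - qa_accept A lam m H' z\<bar>
     \<le> 4 * (\<Sum>k<qa_nq A. px lam m (qa_ws A) (qa_state A lam m H z k) x0)"
proof -
  let ?n = "qdim lam m (qa_ws A)" and ?M = "qa_meas A z"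
  let ?p = "qa_state A lam m H z (qa_nq A)" and ?p' = "qa_state A lam m H' z (qa_nq A)"
  let ?S = "\<Sum>k<qa_nq A. px lam m (qa_ws A) (qa_state A lam m H z k) x0"
  have sp: "?p \<in> carrier_vec ?n" "nrm ?n (vec_index ?p) = 1" using state_props[OF wf z H le_refl] by auto
  have sp': "?p' \<in> carrier_vec ?n" "nrm ?n (vec_index ?p') = 1" using state_props[OF wf z H' le_refl] by auto
  have P: "projector_mat ?n ?M" by (rule wfD(5)[OF wf z])
  hence Mc: "?M \<in> carrier_mat ?n ?n" unfolding projector_mat_def by blast
  define a where "a = nrm ?n (vec_index (?M *\<^sub>v ?p))"
  define b where "b = nrm ?n (vec_index (?M *\<^sub>v ?p'))"
  have ea: "qa_accept A lam m H z = a ^ 2"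
    unfolding qa_accept_def a_def by (rule sq_norm_nrm[OF mult_mat_vec_carrier[OF Mc sp(1)]])
  have eb: "qa_accept A lam m H' z = b ^ 2"
    unfolding qa_accept_def b_def by (rule sq_norm_nrm[OF mult_mat_vec_carrier[OF Mc sp'(1)]])
  have a1: "a \<le> 1" "0 \<le> a" unfolding a_def using proj_nrm[OF P sp(1)] sp(2) by auto
  have b1: "b \<le> 1" "0 \<le> b" unfolding b_def using proj_nrm[OF P sp'(1)] sp'(2) by auto
  have "\<bar>a - b\<bar> \<le> nrm ?n (\<lambda>i. vec_index (?M *\<^sub>v ?p) i - vec_index (?M *\<^sub>v ?p') i)"
    unfolding a_def b_def by (rule nrm_rev_tri)
  also have "\<dots> = nrm ?n (vec_index (?M *\<^sub>v (?p - ?p')))"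
  proof (intro nrm_cong)
    fix i assume i: "i < ?n"
    have d: "dim_vec (?M *\<^sub>v ?p') = ?n" using carrier_vecD[OF mult_mat_vec_carrier[OF Mc sp'(1)]] .
    show "vec_index (?M *\<^sub>v ?p) i - vec_index (?M *\<^sub>v ?p') i = vec_index (?M *\<^sub>v (?p - ?p')) i"
      unfolding mult_minus_distrib_mat_vec[OF Mc sp(1) sp'(1)] using i d by simp
  qed
  also have "\<dots> \<le> nrm ?n (vec_index (?p - ?p'))" by (rule proj_nrm[OF P minus_carrier_vec[OF sp(1) sp'(1)]])
  also have "\<dots> = nrm ?n (\<lambda>i. vec_index ?p i - vec_index ?p' i)"
    using sp'(1) by (intro nrm_cong) (simp add: carrier_vecD)
  also have "\<dots> \<le> 2 * ?S" by (rule hybrid[OF wf z H H' agree le_refl])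
  finally have d: "\<bar>a - b\<bar> \<le> 2 * ?S" .
  have "a^2 - b^2 = (a - b) * (a + b)" by (simp add: power2_eq_square algebra_simps)
  hence "\<bar>a^2 - b^2\<bar> = \<bar>a - b\<bar> * (a + b)" using a1 b1 by (simp add: abs_mult)
  also have "\<dots> \<le> (2 * ?S) * 2" using d a1 b1 by (intro mult_mono) auto
  finally show ?thesis unfolding ea eb by simp
qed


lemma px_sq_sum:
  assumes u: "u \<in> carrier_vec (qdim lam m w)" and n1: "nrm (qdim lam m w) (vec_index u) = 1"
  shows "(\<Sum>x<2^lam. (px lam m w u x)^2) = 1"
proof -
  let ?n = "qdim lam m w" and ?K = "2^m*w"
  have "(\<Sum>x<2^lam. (px lam m w u x)^2) = (\<Sum>x<2^lam. \<Sum>i\<in>{i. i \<in> {..<?n} \<and> i div ?K = x}. (cmod (vec_index u i))^2)"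
    unfolding px_def L2_set_def Sx_def by (intro sum.cong refl) (simp add: sum_nonneg)
  also have "\<dots> = (\<Sum>i<?n. (cmod (vec_index u i))^2)"
  proof (rule sum.group)
    show "(\<lambda>i. i div ?K) ` {..<?n} \<subseteq> {..<2^lam}"
      by (auto simp: qdim_def less_mult_imp_div_less mult.assoc)
  qed auto
  also have "\<dots> = 1" using n1 nrm_sq[of ?n "vec_index u"] by simp
  finally show ?thesis .
qed

lemma weighted_avg:
  fixes p a :: "nat \<Rightarrow> real"
  assumes p0: "\<And>x. 0 \<le> p x" and ps: "\<And>x. p x \<le> s" and p1: "(\<Sum>x<N. p x) = 1"
    and a0: "\<And>x. 0 \<le> a x" and a1: "(\<Sum>x<N. (a x)^2) = 1"
  shows "(\<Sum>x<N. p x * a x) \<le> sqrt s"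
proof -
  have "(\<Sum>x<N. p x * a x) = (\<Sum>x<N. \<bar>p x\<bar> * \<bar>a x\<bar>)" using p0 a0 by simp
  also have "\<dots> \<le> L2_set p {..<N} * L2_set a {..<N}" by (rule L2_set_mult_ineq)
  also have "L2_set a {..<N} = 1" unfolding L2_set_def a1 by simp
  also have "L2_set p {..<N} \<le> sqrt s"
  proof -
    have "(\<Sum>x<N. (p x)^2) \<le> (\<Sum>x<N. s * p x)"
      using p0 ps by (intro sum_mono) (simp add: power2_eq_square mult_right_mono)
    also have "\<dots> = s" using p1 by (simp add: sum_distrib_left[symmetric])
    finally show ?thesis unfolding L2_set_def by simp
  qed
  finally show ?thesis by simp
qed

lemma Hfuns_finite: "finite (Hfuns lam m)" unfolding Hfuns_def by (intro finite_PiE) auto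
lemma Hfuns_ne: "Hfuns lam m \<noteq> {}" unfolding Hfuns_def by (auto simp: PiE_eq_empty_iff lessThan_empty_iff)
lemma Hfuns_ok: "H \<in> Hfuns lam m \<Longrightarrow> \<forall>x<2^lam. H x < 2^m" unfolding Hfuns_def by auto
lemma Hfuns_upd: "H \<in> Hfuns lam m \<Longrightarrow> x < 2^lam \<Longrightarrow> z < 2^m \<Longrightarrow> H(x:=z) \<in> Hfuns lam m"
  unfolding Hfuns_def using PiE_fun_upd[of z "\<lambda>_. {..<2^m}" x H "{..<2^lam}"] by (simp add: insert_absorb)

lemma resample:
  fixes g :: "(nat \<Rightarrow> nat) \<Rightarrow> nat \<Rightarrow> real"
  assumes x: "x < 2^lam"
  shows "(\<Sum>H\<in>Hfuns lam m. \<Sum>z<2^m. g (H(x:=z)) z) = 2^m * (\<Sum>H\<in>Hfuns lam m. g H (H x))"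
proof -
  let ?F = "Hfuns lam m"
  have per: "(\<Sum>H\<in>?F. g (H(x:=z)) z) = 2^m * (\<Sum>H\<in>{H\<in>?F. H x = z}. g H z)" if z: "z < 2^m" for z
  proof -
    have bij: "bij_betw (\<lambda>(H,u). H(x:=u)) ({H\<in>?F. H x = z} \<times> {..<2^m}) ?F"
    proof (rule bij_betw_byWitness[where f'="\<lambda>H. (H(x:=z), H x)"])
      show "\<forall>a\<in>{H \<in> ?F. H x = z} \<times> {..<2 ^ m}. (\<lambda>H. (H(x := z), H x)) ((\<lambda>(H, u). H(x := u)) a) = a"
        by auto
      show "\<forall>a'\<in>?F. (\<lambda>(H, u). H(x := u)) (a'(x := z), a' x) = a'" by auto
      show "(\<lambda>(H, u). H(x := u)) ` ({H \<in> ?F. H x = z} \<times> {..<2 ^ m}) \<subseteq> ?F"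
        using Hfuns_upd x by auto
      show "(\<lambda>H. (H(x := z), H x)) ` ?F \<subseteq> {H \<in> ?F. H x = z} \<times> {..<2 ^ m}"
        using Hfuns_upd[OF _ x z] Hfuns_ok x by auto
    qed
    have "(\<Sum>H\<in>?F. g (H(x:=z)) z) = (\<Sum>a\<in>{H\<in>?F. H x = z} \<times> {..<2^m}. g (((\<lambda>(H,u). H(x:=u)) a)(x:=z)) z)"
      by (rule sum.reindex_bij_betw[OF bij, symmetric])
    also have "\<dots> = (\<Sum>(H,u)\<in>{H\<in>?F. H x = z} \<times> {..<(2::nat)^m}. g H z)"
      by (intro sum.cong refl) auto
    also have "\<dots> = (\<Sum>H\<in>{H\<in>?F. H x = z}. \<Sum>u<(2::nat)^m. g H z)"
      by (rule sum.cartesian_product[symmetric])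
    also have "\<dots> = 2^m * (\<Sum>H\<in>{H\<in>?F. H x = z}. g H z)"
      by (simp add: sum_distrib_left)
    finally show ?thesis .
  qed
  have "(\<Sum>H\<in>?F. \<Sum>z<2^m. g (H(x:=z)) z) = (\<Sum>z<2^m. \<Sum>H\<in>?F. g (H(x:=z)) z)" by (rule sum.swap)
  also have "\<dots> = (\<Sum>z<2^m. 2^m * (\<Sum>H\<in>{H\<in>?F. H x = z}. g H z))" by (intro sum.cong refl) (simp add: per)
  also have "\<dots> = 2^m * (\<Sum>z<2^m. \<Sum>H\<in>{H\<in>?F. H x = z}. g H (H x))"
    by (simp add: sum_distrib_left)
  also have "(\<Sum>z<2^m. \<Sum>H\<in>{H\<in>?F. H x = z}. g H (H x)) = (\<Sum>H\<in>?F. g H (H x))"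
    by (rule sum.group) (use Hfuns_finite Hfuns_ok x in auto)
  finally show ?thesis .
qed


lemma inner_pmf: "0 \<le> a \<Longrightarrow> a \<le> 1 \<Longrightarrow>
  pmf (bernoulli_pmf a \<bind> (\<lambda>b'. return_pmf (b' = b))) True = (if b then a else 1 - a)"
  by (cases b) (simp_all add: pmf_bind measure_pmf_single)

lemma pmf_dist:
  assumes wf: "wf_qadv lam m A" and Xs: "set_pmf X \<subseteq> {..<2^lam}"
  shows "pmf (distinguish A lam m X) True =
    (\<Sum>H\<in>Hfuns lam m. ((\<Sum>z<2^m. qa_accept A lam m H z) / 2^m
        + (\<Sum>x<2^lam. (1 - qa_accept A lam m H (H x)) * pmf X x)) / 2) / card (Hfuns lam m)"
proof -
  let ?F = "Hfuns lam m"
  let ?G = "\<lambda>H b c. bernoulli_pmf (qa_accept A lam m H c) \<bind> (\<lambda>b'. return_pmf (b' = b))"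
  have G: "pmf (?G H b c) True = (if b then qa_accept A lam m H c else 1 - qa_accept A lam m H c)"
    if "H \<in> ?F" "c < 2^m" for H b c
    using acc_bounds[OF wf that(2) Hfuns_ok[OF that(1)]] by (intro inner_pmf)
  have inn: "pmf (bernoulli_pmf (1/2) \<bind> (\<lambda>b. (if b then pmf_of_set {..<2^m} else map_pmf H X) \<bind> ?G H b)) True
     = ((\<Sum>z<2^m. qa_accept A lam m H z) / 2^m + (\<Sum>x<2^lam. (1 - qa_accept A lam m H (H x)) * pmf X x)) / 2"
    if H: "H \<in> ?F" for H
  proof -
    have t: "pmf (pmf_of_set {..<2^m} \<bind> ?G H True) True = (\<Sum>z<2^m. qa_accept A lam m H z) / 2^m"
    proof -
      have "pmf (pmf_of_set {..<2^m} \<bind> ?G H True) True = (\<Sum>z\<in>{..<2^m}. pmf (?G H True z) True) / real (card {..<(2::nat)^m})"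
        by (rule pmf_bind_pmf_of_set) (auto simp: lessThan_empty_iff)
      also have "\<dots> = (\<Sum>z<2^m. qa_accept A lam m H z) / 2^m"
      proof (intro arg_cong2[where f="(/)"] sum.cong refl)
        fix z assume z: "z \<in> {..<(2::nat)^m}"
        show "pmf (?G H True z) True = qa_accept A lam m H z" using G[OF H, of z True] z by simp
      qed simp
      finally show ?thesis .
    qed
    have f: "pmf (map_pmf H X \<bind> ?G H False) True = (\<Sum>x<2^lam. (1 - qa_accept A lam m H (H x)) * pmf X x)"
    proof -
      have "pmf (map_pmf H X \<bind> ?G H False) True = (\<integral>x. pmf (?G H False (H x)) True \<partial>measure_pmf X)"
        by (simp only: pmf_bind integral_map_pmf)
      also have "\<dots> = (\<Sum>x<2^lam. pmf (?G H False (H x)) True * pmf X x)"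
        by (rule integral_measure_pmf_real) (use Xs in auto)
      also have "\<dots> = (\<Sum>x<2^lam. (1 - qa_accept A lam m H (H x)) * pmf X x)"
      proof (intro sum.cong refl)
        fix x assume x: "x \<in> {..<(2::nat)^lam}"
        show "pmf (?G H False (H x)) True * pmf X x = (1 - qa_accept A lam m H (H x)) * pmf X x"
          using G[OF H, of "H x" False] Hfuns_ok[OF H] x by simp
      qed
      finally show ?thesis .
    qed
    let ?K = "\<lambda>b. (if b then pmf_of_set {..<2^m} else map_pmf H X) \<bind> ?G H b"
    have "pmf (bernoulli_pmf (1/2) \<bind> ?K) True = (\<integral>b. pmf (?K b) True \<partial>measure_pmf (bernoulli_pmf (1/2)))"
      by (rule pmf_bind)
    also have "\<dots> = pmf (?K True) True * (1/2) + pmf (?K False) True * (1 - 1/2)"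
      by (rule integral_bernoulli_pmf) simp_all
    also have "\<dots> = ((\<Sum>z<2^m. qa_accept A lam m H z) / 2^m + (\<Sum>x<2^lam. (1 - qa_accept A lam m H (H x)) * pmf X x)) / 2"
      unfolding if_True if_False t f by simp
    finally show ?thesis .
  qed
  have "pmf (distinguish A lam m X) True =
     (\<Sum>H\<in>?F. pmf (bernoulli_pmf (1/2) \<bind> (\<lambda>b. (if b then pmf_of_set {..<2^m} else map_pmf H X) \<bind> ?G H b)) True) / card ?F"
    unfolding distinguish_def by (rule pmf_bind_pmf_of_set[OF Hfuns_ne Hfuns_finite])
  also have "\<dots> = (\<Sum>H\<in>?F. ((\<Sum>z<2^m. qa_accept A lam m H z) / 2^m
        + (\<Sum>x<2^lam. (1 - qa_accept A lam m H (H x)) * pmf X x)) / 2) / card ?F"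
    by (intro arg_cong2[where f="(/)"] sum.cong refl) (simp add: inn)
  finally show ?thesis .
qed


lemma adv_bound:
  assumes wf: "wf_qadv lam m A" and Xs: "set_pmf X \<subseteq> {..<2^lam}" and ps: "\<And>x. pmf X x \<le> s"
  shows "pmf (distinguish A lam m X) True \<le> 1/2 + 2 * real (qa_nq A) * sqrt s"
proof -
  let ?F = "Hfuns lam m" and ?acc = "qa_accept A lam m" and ?q = "qa_nq A" and ?w = "qa_ws A"
  let ?M = "(2::real)^m" and ?N = "real (card (Hfuns lam m))" and ?p = "pmf X"
  let ?ps = "\<lambda>H z k. px lam m ?w (qa_state A lam m H z k)"
  define T1 where "T1 H = (\<Sum>z<2^m. ?acc H z) / ?M" for H
  define T2 where "T2 H = (\<Sum>x<2^lam. ?acc H (H x) * ?p x)" for H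
  have p1: "(\<Sum>x<2^lam. ?p x) = 1" by (rule sum_pmf_eq_1) (use Xs in auto)
  have Npos: "?N > 0" using Hfuns_finite Hfuns_ne by (simp add: card_gt_0_iff)
  have Mpos: "?M > 0" by simp
  have T2': "(\<Sum>x<2^lam. (1 - ?acc H (H x)) * ?p x) = 1 - T2 H" for H
    unfolding T2_def using p1 by (simp add: algebra_simps sum_subtractf)
  have P: "pmf (distinguish A lam m X) True = 1/2 + (\<Sum>H\<in>?F. T1 H - T2 H) / (2 * ?N)"
  proof -
    have "pmf (distinguish A lam m X) True = (\<Sum>H\<in>?F. (T1 H + (1 - T2 H)) / 2) / ?N"
      unfolding pmf_dist[OF wf Xs] T2' T1_def ..
    also have "\<dots> = (\<Sum>H\<in>?F. 1/2 + (T1 H - T2 H) / 2) / ?N"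
      by (intro arg_cong2[where f="(/)"] sum.cong refl) (simp add: field_simps)
    also have "\<dots> = (?N / 2 + (\<Sum>H\<in>?F. T1 H - T2 H) / 2) / ?N"
      by (simp add: sum.distrib sum_divide_distrib[symmetric])
    also have "\<dots> = 1/2 + (\<Sum>H\<in>?F. T1 H - T2 H) / (2 * ?N)"
      using Npos by (simp add: field_simps)
    finally show ?thesis .
  qed
  have S1: "(\<Sum>H\<in>?F. T1 H) = (\<Sum>x<2^lam. ?p x * ((\<Sum>H\<in>?F. \<Sum>z<2^m. ?acc H z) / ?M))"
    unfolding T1_def by (simp add: sum_distrib_right[symmetric] p1 sum_divide_distrib[symmetric])
  have S2: "(\<Sum>H\<in>?F. T2 H) = (\<Sum>x<2^lam. ?p x * ((\<Sum>H\<in>?F. \<Sum>z<2^m. ?acc (H(x:=z)) z) / ?M))"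
  proof -
    have "(\<Sum>H\<in>?F. T2 H) = (\<Sum>x<2^lam. ?p x * (\<Sum>H\<in>?F. ?acc H (H x)))"
      unfolding T2_def by (subst sum.swap) (simp add: sum_distrib_left mult_ac)
    also have "\<dots> = (\<Sum>x<2^lam. ?p x * ((\<Sum>H\<in>?F. \<Sum>z<2^m. ?acc (H(x:=z)) z) / ?M))"
      by (intro sum.cong refl) (simp add: resample[where g="\<lambda>H z. ?acc H z"])
    finally show ?thesis .
  qed
  have swp: "(\<Sum>x<2^lam. \<Sum>H\<in>?F. \<Sum>z<(2::nat)^m. \<Sum>k<?q. ?p x * ?ps H z k x)
      = (\<Sum>H\<in>?F. \<Sum>z<(2::nat)^m. \<Sum>k<?q. \<Sum>x<2^lam. ?p x * ?ps H z k x)"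
  proof -
    have "(\<Sum>x<2^lam. \<Sum>H\<in>?F. \<Sum>z<2^m. \<Sum>k<?q. ?p x * ?ps H z k x)
      = (\<Sum>H\<in>?F. \<Sum>x<2^lam. \<Sum>z<2^m. \<Sum>k<?q. ?p x * ?ps H z k x)" by (rule sum.swap)
    also have "\<dots> = (\<Sum>H\<in>?F. \<Sum>z<2^m. \<Sum>x<2^lam. \<Sum>k<?q. ?p x * ?ps H z k x)"
    by (rule sum.cong[OF refl], rule sum.swap)
    also have "\<dots> = (\<Sum>H\<in>?F. \<Sum>z<2^m. \<Sum>k<?q. \<Sum>x<2^lam. ?p x * ?ps H z k x)"
    by (rule sum.cong[OF refl], rule sum.cong[OF refl], rule sum.swap)
    finally show ?thesis .
  qed
  have "(\<Sum>H\<in>?F. T1 H - T2 H) = (\<Sum>H\<in>?F. T1 H) - (\<Sum>H\<in>?F. T2 H)" by (rule sum_subtractf)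
  also have "\<dots> = (\<Sum>x<2^lam. ?p x * ((\<Sum>H\<in>?F. \<Sum>z<2^m. ?acc H z) / ?M))
      - (\<Sum>x<2^lam. ?p x * ((\<Sum>H\<in>?F. \<Sum>z<2^m. ?acc (H(x:=z)) z) / ?M))" unfolding S1 S2 ..
  also have "\<dots> = (\<Sum>x<2^lam. ?p x * ((\<Sum>H\<in>?F. \<Sum>z<2^m. ?acc H z) / ?M)
      - ?p x * ((\<Sum>H\<in>?F. \<Sum>z<2^m. ?acc (H(x:=z)) z) / ?M))" by (rule sum_subtractf[symmetric])
  also have "\<dots> = (\<Sum>x<2^lam. ?p x * ((\<Sum>H\<in>?F. \<Sum>z<2^m. ?acc H z - ?acc (H(x:=z)) z) / ?M))"
    by (rule sum.cong[OF refl]) (simp add: sum_subtractf right_diff_distrib diff_divide_distrib)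
  also have "\<dots> \<le> (\<Sum>x<2^lam. ?p x * ((\<Sum>H\<in>?F. \<Sum>z<2^m. 4 * (\<Sum>k<?q. ?ps H z k x)) / ?M))"
  proof (rule sum_mono)
    fix x assume x: "x \<in> {..<(2::nat)^lam}"
    have inner: "(\<Sum>H\<in>?F. \<Sum>z<2^m. ?acc H z - ?acc (H(x:=z)) z) \<le> (\<Sum>H\<in>?F. \<Sum>z<2^m. 4 * (\<Sum>k<?q. ?ps H z k x))"
    proof (rule sum_mono, rule sum_mono)
      fix H z assume H: "H \<in> ?F" and z: "z \<in> {..<(2::nat)^m}"
      have "\<bar>?acc H z - ?acc (H(x:=z)) z\<bar> \<le> 4 * (\<Sum>k<?q. ?ps H z k x)"
        by (rule acc_diff[OF wf _ Hfuns_ok[OF H] Hfuns_ok[OF Hfuns_upd[OF H]]]) (use x z in auto)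
      thus "?acc H z - ?acc (H(x:=z)) z \<le> 4 * (\<Sum>k<?q. ?ps H z k x)" by simp
    qed
    show "?p x * ((\<Sum>H\<in>?F. \<Sum>z<2^m. ?acc H z - ?acc (H(x:=z)) z) / ?M)
      \<le> ?p x * ((\<Sum>H\<in>?F. \<Sum>z<2^m. 4 * (\<Sum>k<?q. ?ps H z k x)) / ?M)"
      by (intro mult_left_mono divide_right_mono inner) auto
  qed
  also have "\<dots> = (\<Sum>x<2^lam. 4 / ?M * (\<Sum>H\<in>?F. \<Sum>z<2^m. \<Sum>k<?q. ?p x * ?ps H z k x))"
    by (rule sum.cong[OF refl]) (simp add: sum_distrib_left sum_divide_distrib mult_ac)
  also have "\<dots> = 4 / ?M * (\<Sum>x<2^lam. \<Sum>H\<in>?F. \<Sum>z<2^m. \<Sum>k<?q. ?p x * ?ps H z k x)"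
    by (rule sum_distrib_left[symmetric])
  also have "\<dots> = 4 / ?M * (\<Sum>H\<in>?F. \<Sum>z<(2::nat)^m. \<Sum>k<?q. \<Sum>x<2^lam. ?p x * ?ps H z k x)"
    unfolding swp ..
  also have "\<dots> \<le> 4 / ?M * (\<Sum>H\<in>?F. \<Sum>z<(2::nat)^m. \<Sum>k<?q. sqrt s)"
  proof (intro mult_left_mono sum_mono)
    fix H z k assume H: "H \<in> ?F" and z: "z \<in> {..<(2::nat)^m}" and k: "k \<in> {..<?q}"
    have sp: "qa_state A lam m H z k \<in> carrier_vec (qdim lam m ?w)"
      "nrm (qdim lam m ?w) (vec_index (qa_state A lam m H z k)) = 1"
      using state_props[OF wf _ Hfuns_ok[OF H], of z k] z k by auto
    show "(\<Sum>x<2^lam. ?p x * ?ps H z k x) \<le> sqrt s"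
      by (rule weighted_avg[OF pmf_nonneg ps p1 _ px_sq_sum[OF sp]]) (simp add: px_def)
  qed auto
  also have "\<dots> = 4 * ?N * ?q * sqrt s" using Mpos by simp
  finally have "(\<Sum>H\<in>?F. T1 H - T2 H) \<le> 4 * ?N * ?q * sqrt s" .
  hence "(\<Sum>H\<in>?F. T1 H - T2 H) / (2 * ?N) \<le> 4 * ?N * ?q * sqrt s / (2 * ?N)"
    using Npos by (intro divide_right_mono) auto
  also have "\<dots> = 2 * ?q * sqrt s" using Npos by simp
  finally show ?thesis unfolding P by simp
qed


theorem mainTheorem2:
  fixes \<epsilon> :: real
    and X :: "nat \<Rightarrow> nat pmf"
    and m :: "nat \<Rightarrow> nat"
    and A :: "nat \<Rightarrow> qadv"
  assumes eps: "\<epsilon> > 0"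
    and X_supp: "\<And>lam. set_pmf (X lam) \<subseteq> {..<2 ^ lam}"
    and X_entropy: "\<forall>\<^sub>F lam in sequentially. min_entropy (X lam) > real lam powr \<epsilon>"
    and m_poly: "poly_bounded m"
    and A_wf: "\<And>lam. wf_qadv lam (m lam) (A lam)"
    and A_queries: "poly_bounded (\<lambda>lam. qa_nq (A lam))"
  shows "\<exists>\<mu>. negligible \<mu> \<and>
           (\<forall>lam. pmf (distinguish (A lam) lam (m lam) (X lam)) True \<le> 1 / 2 + \<mu> lam)"
proof -
  obtain c k0 where qb: "\<And>n. qa_nq (A n) \<le> c * (n + 1) ^ k0"
    using A_queries unfolding poly_bounded_def by blast
  define s where "s lam = Sup (range (pmf (X lam)))" for lam
  have ps: "pmf (X lam) x \<le> s lam" for lam x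
    unfolding s_def by (rule cSup_upper) (auto intro: bdd_aboveI pmf_le_1)
  define \<mu> where "\<mu> lam = 2 * real (qa_nq (A lam)) * sqrt (s lam)" for lam
  have bound: "\<forall>lam. pmf (distinguish (A lam) lam (m lam) (X lam)) True \<le> 1 / 2 + \<mu> lam"
    unfolding \<mu>_def using adv_bound[OF A_wf X_supp ps] by blast
  define f where "f n = 2 * real c * (real n + 1) ^ k0 * 2 powr (- (real n powr \<epsilon>) / 2)" for n :: nat
  have ev: "eventually (\<lambda>n. norm (\<mu> n) \<le> 1 * norm (f n)) sequentially"
    using X_entropy
  proof eventually_elim
    case (elim n)
    obtain x where x: "x \<in> set_pmf (X n)" using set_pmf_not_empty by fastforce
    have spos: "s n > 0" using pmf_positive[OF x] ps[of n x] by linarith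
    have "log 2 (s n) < - (real n powr \<epsilon>)" using elim unfolding min_entropy_def s_def by simp
    hence "s n < 2 powr (- (real n powr \<epsilon>))"
      using spos by (metis powr_log_cancel powr_less_mono one_less_numeral_iff semiring_norm(76)
          zero_less_numeral numeral_One less_numeral_extra(1) less_irrefl)
    hence "sqrt (s n) \<le> sqrt (2 powr (- (real n powr \<epsilon>)))" by simp
    also have "\<dots> = 2 powr (- (real n powr \<epsilon>) / 2)" using powr_half_sqrt_powr[of 2 "- (real n powr \<epsilon>)"] by simp
    finally have sq: "sqrt (s n) \<le> 2 powr (- (real n powr \<epsilon>) / 2)" .
    have q: "real (qa_nq (A n)) \<le> real c * (real n + 1) ^ k0"
      using qb[of n] by (metis of_nat_Suc of_nat_le_iff of_nat_mult of_nat_power Suc_eq_plus1 add.commute)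
    have "\<mu> n \<le> 2 * (real c * (real n + 1) ^ k0) * 2 powr (- (real n powr \<epsilon>) / 2)"
      unfolding \<mu>_def using q sq spos by (intro mult_mono) auto
    moreover have "\<mu> n \<ge> 0" unfolding \<mu>_def using spos by simp
    moreover have "f n \<ge> 0" unfolding f_def by simp
    ultimately show ?case unfolding f_def by (simp add: mult_ac)
  qed
  have neg: "negligible \<mu>"
    unfolding negligible_def
  proof
    fix k :: nat
    have "\<mu> \<in> O(f)" using ev by (rule bigoI)
    moreover have "f \<in> o(\<lambda>n. 1 / real n ^ k)" unfolding f_def using eps by real_asymp
    ultimately show "\<mu> \<in> o(\<lambda>n. 1 / real n ^ k)" by (rule landau_o.big_small_trans)
  qed
  show ?thesis using neg bound by blast
qed

end
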